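(* Let $f\in\mathcal{CM}$ be such that its representing measure has a density $\nu:(0,\infty)\to(0,\infty)$ with respect to Lebesgue measure. Assume that for some $\lambda_0>0$: (i) $\displaystyle \frac{(-\lambda)^n f^{(n)}(\lambda)}{n!}\ge\frac{(-\lambda)^{n+1}f^{(n+1)}(\lambda)}{(n+1)!}$ for all $n\in\mathbb{N}\cup\{0\}$ and all $\lambda>\lambda_0$; (ii) $\lim_{\lambda\to\infty}f(\lambda)=0$. Then the representing measure of $f$ has a non-increasing density, i.e. there is a non-increasing function $\mu:(0,\infty)\to[0,\infty)$ with $\nu(dt)=\mu(t)\,dt$.
   Context: A function $f:(0,\infty)\to\mathbb{R}$ is completely monotone, $f\in\mathcal{CM}$, if it is $C^\infty$ and $(-1)^n f^{(n)}(\lambda)\ge0$ for all $n\ge0$, $\lambda>0$; its representing measure is the unique measure $\nu$ on $[0,\infty)$ with $f(\lambda)=\int_{[0,\infty)}e^{-\lambda t}\nu(dt)$. *)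

theory Defs
  imports "HOL-Analysis.Analysis"
begin

definition completely_monotone :: "(real \<Rightarrow> real) \<Rightarrow> bool" where
  "completely_monotone f \<longleftrightarrow>
     (\<forall>n. \<forall>x>0. ((deriv ^^ n) f) differentiable (at x)) \<and>
     (\<forall>n. \<forall>x>0. (-1) ^ n * (deriv ^^ n) f x \<ge> 0)"

text \<open>The representing measure of f is nu(t) dt on (0,infinity), i.e.
  f(lambda) = integral over (0,infinity) of exp(-lambda t) nu(t) dt for all lambda > 0.\<close>
definition rep_density :: "(real \<Rightarrow> real) \<Rightarrow> (real \<Rightarrow> real) \<Rightarrow> bool" where
  "rep_density f \<nu> \<longleftrightarrow>
     \<nu> \<in> borel_measurable (restrict_space lborel {0<..}) \<and>
     (\<forall>t>0. \<nu> t \<ge> 0) \<and>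
     (\<forall>x>0. set_integrable lborel {0<..} (\<lambda>t. exp (- x * t) * \<nu> t) \<and>
              f x = (LINT t:{0<..}|lborel. exp (- x * t) * \<nu> t))"

end

theory Submission
  imports Defs
begin

definition pk :: "nat \<Rightarrow> real \<Rightarrow> real" where
  "pk k u = u ^ k * exp (- u) / fact k"

definition PP :: "nat \<Rightarrow> real \<Rightarrow> real" where
  "PP K u = (\<Sum>k<K. pk k u)"

lemma pk_nonneg: "0 \<le> u \<Longrightarrow> 0 \<le> pk k u"
  by (simp add: pk_def)

lemma exp_partial_le: fixes y :: real assumes "0 \<le> y" shows "(\<Sum>k<K. y ^ k / fact k) \<le> exp y"
proof -
  have s: "(\<lambda>n. y^n /\<^sub>R fact n) sums exp y" by (rule exp_converges)
  have "(\<Sum>k<K. y ^ k /\<^sub>R fact k) \<le> suminf (\<lambda>n. y^n /\<^sub>R fact n)"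
    using sum_le_suminf[of "\<lambda>n. y^n /\<^sub>R fact n" "{..<K}"] s assms by (auto simp: sums_iff)
  then show ?thesis using s by (simp add: sums_iff divide_inverse mult.commute)
qed

lemma pow_exp_bound: fixes y :: real assumes "0 \<le> y" shows "y ^ k / fact k \<le> exp y"
proof -
  have "y ^ k / fact k \<le> (\<Sum>j<Suc k. y ^ j / fact j)"
    using member_le_sum[of k "{..<Suc k}" "\<lambda>j. y ^ j / fact j"] assms by auto
  also have "\<dots> \<le> exp y" by (rule exp_partial_le[OF assms])
  finally show ?thesis .
qed

lemma PP_nonneg: "0 \<le> u \<Longrightarrow> 0 \<le> PP K u"
  unfolding PP_def by (intro sum_nonneg pk_nonneg)

lemma PP_mono: assumes "0 \<le> u" "M \<le> K" shows "PP M u \<le> PP K u"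
  unfolding PP_def by (rule sum_mono2) (use assms in \<open>auto intro: pk_nonneg\<close>)

lemma PP_Suc: "PP (Suc K) u = PP K u + pk K u"
  by (simp add: PP_def)

lemma PP_window: "PP (m + L) u - PP m u = (\<Sum>j<L. pk (m + j) u)"
  by (induction L) (auto simp: PP_Suc)

lemma P1_bound: assumes "0 \<le> u"
  shows "(\<Sum>k<K. pk k u * exp (s * real k)) \<le> exp (u * (exp s - 1))"
proof -
  have "(\<Sum>k<K. pk k u * exp (s * real k)) = exp (-u) * (\<Sum>k<K. (u * exp s) ^ k / fact k)"
    by (simp add: pk_def sum_distrib_left power_mult_distrib exp_of_nat_mult[symmetric]
         mult.commute mult.left_commute)
  also have "\<dots> \<le> exp (-u) * exp (u * exp s)"
    by (intro mult_left_mono exp_partial_le) (use assms in auto)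
  also have "\<dots> = exp (u * (exp s - 1))" by (simp add: exp_add[symmetric] algebra_simps)
  finally show ?thesis .
qed

lemma PP_le1: assumes "0 \<le> u" shows "PP K u \<le> 1"
proof -
  have "(\<Sum>k<K. pk k u * exp (0 * real k)) \<le> exp (u * (exp 0 - 1))" by (rule P1_bound[OF assms])
  then show ?thesis by (simp add: PP_def)
qed

lemma P2_bound: assumes "0 \<le> u" "0 \<le> s"
  shows "PP K u \<le> exp (s * real K) * exp (u * (exp (-s) - 1))"
proof -
  have "PP K u \<le> (\<Sum>k<K. pk k u * exp (s * real K) * exp (- s * real k))"
    unfolding PP_def
  proof (rule sum_mono)
    fix k assume "k \<in> {..<K}"
    then have "0 \<le> s * real K + - s * real k" using assms by (simp add: algebra_simps mult_left_mono)
    then have "1 \<le> exp (s * real K) * exp (- s * real k)" by (simp add: exp_add[symmetric])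
    then show "pk k u \<le> pk k u * exp (s * real K) * exp (- s * real k)"
      using pk_nonneg[OF assms(1), of k] by (metis mult.assoc mult_left_mono mult.right_neutral)
  qed
  also have "\<dots> = exp (s * real K) * (\<Sum>k<K. pk k u * exp (- s * real k))"
    by (simp add: sum_distrib_left mult.commute mult.left_commute)
  also have "\<dots> \<le> exp (s * real K) * exp (u * (exp (-s) - 1))"
    by (intro mult_left_mono P1_bound assms) auto
  finally show ?thesis .
qed

lemma PP_lim1: assumes "0 \<le> u" shows "(\<lambda>N. PP N u) \<longlonglongrightarrow> 1"
proof -
  have "(\<lambda>N. \<Sum>k<N. u ^ k /\<^sub>R fact k) \<longlonglongrightarrow> exp u"
    using exp_converges[of u] by (simp add: sums_def)
  then have "(\<lambda>N. exp (-u) * (\<Sum>k<N. u ^ k /\<^sub>R fact k)) \<longlonglongrightarrow> exp (-u) * exp u"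
    by (intro tendsto_mult tendsto_const)
  moreover have "\<And>N. exp (-u) * (\<Sum>k<N. u ^ k /\<^sub>R fact k) = PP N u"
    by (simp add: PP_def pk_def sum_distrib_left divide_inverse mult.commute mult.left_commute)
  ultimately show ?thesis by (simp add: exp_add[symmetric])
qed

lemma P3_bound: assumes "0 \<le> u" "0 \<le> s"
  shows "1 - PP K u \<le> exp (- s * real K) * exp (u * (exp s - 1))"
proof -
  have "(\<lambda>N. PP N u - PP K u) \<longlonglongrightarrow> 1 - PP K u"
    by (intro tendsto_diff PP_lim1 tendsto_const assms)
  moreover have "eventually (\<lambda>N. PP N u - PP K u \<le> exp (- s * real K) * exp (u * (exp s - 1))) sequentially"
  proof (rule eventually_sequentiallyI[of K])
    fix N assume "K \<le> N"
    then obtain L where N: "N = K + L" using le_Suc_ex by blast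
    have "PP N u - PP K u = (\<Sum>j<L. pk (K + j) u)" using PP_window N by simp
    also have "\<dots> \<le> (\<Sum>j<L. exp (- s * real K) * (pk (K + j) u * exp (s * real (K + j))))"
    proof (rule sum_mono)
      fix j assume "j \<in> {..<L}"
      have "exp (- s * real K) * exp (s * real (K + j)) = exp (s * real j)"
        by (simp add: exp_add[symmetric] algebra_simps)
      moreover have "1 \<le> exp (s * real j)" using assms by simp
      ultimately show "pk (K + j) u \<le> exp (- s * real K) * (pk (K + j) u * exp (s * real (K + j)))"
        using pk_nonneg[OF assms(1), of "K+j"]
        by (metis mult.commute mult.left_commute mult_left_mono mult.right_neutral)
    qed
    also have "\<dots> = exp (- s * real K) * (\<Sum>j<L. pk (K + j) u * exp (s * real (K + j)))"
      by (simp add: sum_distrib_left)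
    also have "(\<Sum>j<L. pk (K + j) u * exp (s * real (K + j))) \<le> (\<Sum>k<N. pk k u * exp (s * real k))"
    proof -
      have "(\<Sum>j<L. pk (K + j) u * exp (s * real (K + j))) = (\<Sum>k\<in>(\<lambda>j. K + j) ` {..<L}. pk k u * exp (s * real k))"
        by (subst sum.reindex) (auto simp: inj_on_def)
      also have "\<dots> \<le> (\<Sum>k<N. pk k u * exp (s * real k))"
        by (rule sum_mono2) (use N assms in \<open>auto intro!: mult_nonneg_nonneg pk_nonneg\<close>)
      finally show ?thesis .
    qed
    then have "exp (- s * real K) * (\<Sum>j<L. pk (K + j) u * exp (s * real (K + j))) \<le> exp (- s * real K) * (\<Sum>k<N. pk k u * exp (s * real k))"
      by (rule mult_left_mono) simp
    also have "\<dots> \<le> exp (- s * real K) * exp (u * (exp s - 1))"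
      by (intro mult_left_mono P1_bound assms) auto
    finally show "PP N u - PP K u \<le> exp (- s * real K) * exp (u * (exp s - 1))" .
  qed
  ultimately show ?thesis by (intro tendsto_upperbound) auto
qed

lemma exp_lin_to_0: assumes "0 < \<delta>" shows "(\<lambda>n. C * exp (- (\<delta> * real n))) \<longlonglongrightarrow> 0"
proof -
  have "(\<lambda>n. exp (- \<delta>) ^ n) \<longlonglongrightarrow> 0"
    by (rule LIMSEQ_power_zero) (use assms in simp)
  moreover have "\<And>n. exp (- \<delta>) ^ n = exp (- (\<delta> * real n))"
    by (simp add: exp_of_nat_mult[symmetric] mult.commute)
  ultimately have "(\<lambda>n. exp (- (\<delta> * real n))) \<longlonglongrightarrow> 0" by simp
  then show ?thesis using tendsto_mult_right_zero by blast
qed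

lemma LA:
  assumes "0 < t" "t < c" "\<And>n. real (K n) \<ge> real n * c - 2"
  shows "(\<lambda>n. 1 - PP (K n) (real n * t)) \<longlonglongrightarrow> 0"
proof -
  define s where "s = (c - t) / (2 * c)"
  have c0: "0 < c" using assms by simp
  have s0: "0 < s" "s < 1" using assms c0 by (auto simp: s_def field_simps)
  have "1 - s \<le> exp (- s)" using exp_ge_add_one_self[of "-s"] by simp
  then have es: "exp s \<le> 1 / (1 - s)" using s0 by (simp add: exp_minus field_simps)
  define \<delta> where "\<delta> = s * c - t * (exp s - 1)"
  have "t * (exp s - 1) \<le> t * (1 / (1 - s) - 1)" using es assms by (intro mult_left_mono) auto
  also have "\<dots> = t * s / (1 - s)" using s0 by (simp add: field_simps)
  also have "\<dots> < s * c"
  proof -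
    have "t < c * (1 - s)" using assms c0 by (simp add: s_def field_simps)
    then have "s * t < s * (c * (1 - s))" using s0 by (intro mult_strict_left_mono) auto
    then have "t * s < s * c * (1 - s)" by (simp add: algebra_simps)
    then show ?thesis using s0 by (simp add: field_simps)
  qed
  finally have d0: "0 < \<delta>" by (simp add: \<delta>_def)
  show ?thesis
  proof (rule tendsto_sandwich[of "\<lambda>n. 0" _ _ "\<lambda>n. exp (2 * s) * exp (- (\<delta> * real n))"])
    show "\<forall>\<^sub>F n in sequentially. 0 \<le> 1 - PP (K n) (real n * t)"
      using PP_le1 assms by (auto intro!: always_eventually)
    show "\<forall>\<^sub>F n in sequentially. 1 - PP (K n) (real n * t) \<le> exp (2 * s) * exp (- (\<delta> * real n))"
    proof (intro always_eventually allI)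
      fix n
      have "1 - PP (K n) (real n * t) \<le> exp (- s * real (K n)) * exp (real n * t * (exp s - 1))"
        by (rule P3_bound) (use assms s0 in auto)
      also have "\<dots> = exp (- s * real (K n) + real n * t * (exp s - 1))" by (rule exp_add[symmetric])
      also have "\<dots> \<le> exp (2 * s + - (\<delta> * real n))"
      proof -
        have "s * (real n * c - 2) \<le> s * real (K n)" using assms(3)[of n] s0 by (intro mult_left_mono) auto
        then show ?thesis by (simp add: \<delta>_def algebra_simps)
      qed
      also have "\<dots> = exp (2 * s) * exp (- (\<delta> * real n))" by (rule exp_add)
      finally show "1 - PP (K n) (real n * t) \<le> exp (2 * s) * exp (- (\<delta> * real n))" .
    qed
  qed (auto intro: exp_lin_to_0[OF d0, of 1, simplified])
qed

lemma LB:
  assumes "0 \<le> d" "d < t" "\<And>n. real (K n) \<le> real n * d + 2"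
  shows "(\<lambda>n. PP (K n) (real n * t)) \<longlonglongrightarrow> 0"
proof -
  define s where "s = (t - d) / (2 * t)"
  have t0: "0 < t" using assms by simp
  have s0: "0 < s" "s \<le> 1" using assms t0 by (auto simp: s_def field_simps)
  have "1 + s \<le> exp s" using exp_ge_add_one_self[of "s"] by simp
  then have es: "exp (-s) \<le> 1 / (1 + s)" using s0 by (simp add: exp_minus field_simps)
  define \<delta> where "\<delta> = t * (1 - exp (-s)) - s * d"
  have "s * d < t * s / (1 + s)"
  proof -
    have p: "0 < (2*t - d) * (t - d) / (2 * t)" using assms t0 by (intro divide_pos_pos mult_pos_pos) auto
    have "d * (1 + s) = t - (2*t - d) * (t - d) / (2 * t)" using t0 by (simp add: s_def field_simps)
    then have "d * (1 + s) < t" using p by linarith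
    then have "s * (d * (1 + s)) < s * t" using s0 by (intro mult_strict_left_mono) auto
    then have "s * d * (1 + s) < t * s" by (simp add: algebra_simps)
    then show ?thesis using s0 by (simp add: field_simps)
  qed
  also have "t * s / (1 + s) = t * (1 - 1 / (1 + s))" using s0 by (simp add: field_simps)
  also have "\<dots> \<le> t * (1 - exp (-s))" using es t0 by (intro mult_left_mono) auto
  finally have d0: "0 < \<delta>" by (simp add: \<delta>_def)
  show ?thesis
  proof (rule tendsto_sandwich[of "\<lambda>n. 0" _ _ "\<lambda>n. exp (2 * s) * exp (- (\<delta> * real n))"])
    show "\<forall>\<^sub>F n in sequentially. 0 \<le> PP (K n) (real n * t)"
      using PP_nonneg t0 by (auto intro!: always_eventually)
    show "\<forall>\<^sub>F n in sequentially. PP (K n) (real n * t) \<le> exp (2 * s) * exp (- (\<delta> * real n))"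
    proof (intro always_eventually allI)
      fix n
      have "PP (K n) (real n * t) \<le> exp (s * real (K n)) * exp (real n * t * (exp (-s) - 1))"
        by (rule P2_bound) (use t0 s0 in auto)
      also have "\<dots> = exp (s * real (K n) + real n * t * (exp (-s) - 1))" by (rule exp_add[symmetric])
      also have "\<dots> \<le> exp (2 * s + - (\<delta> * real n))"
      proof -
        have "s * real (K n) \<le> s * (real n * d + 2)" using assms(3)[of n] s0 by (intro mult_left_mono) auto
        then show ?thesis by (simp add: \<delta>_def algebra_simps)
      qed
      also have "\<dots> = exp (2 * s) * exp (- (\<delta> * real n))" by (rule exp_add)
      finally show "PP (K n) (real n * t) \<le> exp (2 * s) * exp (- (\<delta> * real n))" .
    qed
  qed (auto intro: exp_lin_to_0[OF d0, of 1, simplified])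
qed

lemma WL:
  assumes "0 < t" "0 \<le> c" "c < d" "t \<noteq> c" "t \<noteq> d"
    and K: "\<And>n. \<bar>real (K n) - real n * d\<bar> \<le> 2"
    and M: "\<And>n. \<bar>real (M n) - real n * c\<bar> \<le> 2"
    and MK: "\<And>n. M n \<le> K n"
  shows "(\<lambda>n. PP (K n) (real n * t) - PP (M n) (real n * t)) \<longlonglongrightarrow> indicator {c<..d} t"
proof -
  have nn: "\<And>n. 0 \<le> PP (K n) (real n * t) - PP (M n) (real n * t)"
  proof -
    fix n
    have "PP (M n) (real n * t) \<le> PP (K n) (real n * t)" by (rule PP_mono[OF _ MK]) (use assms(1) in simp)
    then show "0 \<le> PP (K n) (real n * t) - PP (M n) (real n * t)" by simp
  qed
  have K1: "real n * d - 2 \<le> real (K n)" for n using K[of n] by (simp add: abs_le_iff)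
  have K2: "real (K n) \<le> real n * d + 2" for n using K[of n] by (simp add: abs_le_iff)
  have M1: "real n * c - 2 \<le> real (M n)" for n using M[of n] by (simp add: abs_le_iff)
  have M2: "real (M n) \<le> real n * c + 2" for n using M[of n] by (simp add: abs_le_iff)
  consider "t < c" | "d < t" | "c < t \<and> t < d" using assms by linarith
  then show ?thesis
  proof cases
    case 1
    have lim: "(\<lambda>n. 1 - PP (M n) (real n * t)) \<longlonglongrightarrow> 0"
      by (rule LA[OF assms(1) 1]) (use M1 in auto)
    have ev1: "\<forall>\<^sub>F n in sequentially. PP (K n) (real n * t) - PP (M n) (real n * t) \<le> 1 - PP (M n) (real n * t)"
    proof (intro always_eventually allI)
      fix n
      have "PP (K n) (real n * t) \<le> 1" by (rule PP_le1) (use assms(1) in simp)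
      then show "PP (K n) (real n * t) - PP (M n) (real n * t) \<le> 1 - PP (M n) (real n * t)" by linarith
    qed
    have ev0: "\<forall>\<^sub>F n in sequentially. 0 \<le> PP (K n) (real n * t) - PP (M n) (real n * t)"
      by (rule always_eventually) (use nn in blast)
    have "(\<lambda>n. PP (K n) (real n * t) - PP (M n) (real n * t)) \<longlonglongrightarrow> 0"
      by (rule tendsto_sandwich[OF ev0 ev1 tendsto_const lim])
    then show ?thesis using 1 by simp
  next
    case 2
    have lim: "(\<lambda>n. PP (K n) (real n * t)) \<longlonglongrightarrow> 0"
      by (rule LB[OF _ 2]) (use K2 assms in auto)
    have ev1: "\<forall>\<^sub>F n in sequentially. PP (K n) (real n * t) - PP (M n) (real n * t) \<le> PP (K n) (real n * t)"
    proof (intro always_eventually allI)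
      fix n
      have "0 \<le> PP (M n) (real n * t)" by (rule PP_nonneg) (use assms(1) in simp)
      then show "PP (K n) (real n * t) - PP (M n) (real n * t) \<le> PP (K n) (real n * t)" by linarith
    qed
    have ev0: "\<forall>\<^sub>F n in sequentially. 0 \<le> PP (K n) (real n * t) - PP (M n) (real n * t)"
      by (rule always_eventually) (use nn in blast)
    have "(\<lambda>n. PP (K n) (real n * t) - PP (M n) (real n * t)) \<longlonglongrightarrow> 0"
      by (rule tendsto_sandwich[OF ev0 ev1 tendsto_const lim])
    then show ?thesis using 2 by simp
  next
    case 3
    have a: "(\<lambda>n. 1 - PP (K n) (real n * t)) \<longlonglongrightarrow> 0"
      by (rule LA[OF assms(1)]) (use K1 3 in auto)
    have b: "(\<lambda>n. PP (M n) (real n * t)) \<longlonglongrightarrow> 0"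
      by (rule LB[OF assms(2)]) (use M2 3 in auto)
    have "(\<lambda>n. 1 - (1 - PP (K n) (real n * t)) - PP (M n) (real n * t)) \<longlonglongrightarrow> 1 - 0 - 0"
      by (intro tendsto_diff a b tendsto_const)
    then show ?thesis using 3 by simp
  qed
qed

lemma DOM:
  assumes "0 \<le> d" "real (K n) \<le> real n * d + 2" "1 \<le> n" "0 \<le> t"
  shows "PP (K n) (real n * t) \<le> exp (d + 2 - t / 4)"
proof (cases "4 * d \<le> t")
  case True
  have "PP (K n) (real n * t) \<le> exp (1 * real (K n)) * exp (real n * t * (exp (-1) - 1))"
    by (rule P2_bound) (use assms in auto)
  also have "\<dots> = exp (real (K n) + real n * t * (exp (-1) - 1))" by (simp add: exp_add)
  also have "\<dots> \<le> exp (d + 2 - t / 4)"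
  proof -
    have e1: "exp (-1::real) \<le> 1/2"
    proof -
      have "2 \<le> exp (1::real)" using exp_ge_add_one_self[of 1] by simp
      then show ?thesis by (simp add: exp_minus field_simps)
    qed
    have "real n * t * (exp (-1) - 1) \<le> real n * t * (- 1/2)"
      using e1 assms by (intro mult_left_mono) auto
    moreover have "(real n - 1) * d \<le> (real n - 1) * (t / 2)"
      using assms True by (intro mult_left_mono) auto
    ultimately have "real (K n) + real n * t * (exp (-1) - 1) \<le> d + 2 - t / 4"
      using assms by (simp add: algebra_simps)
    then show ?thesis by simp
  qed
  finally show ?thesis .
next
  case False
  have "PP (K n) (real n * t) \<le> 1" by (rule PP_le1) (use assms in auto)
  also have "1 \<le> exp (d + 2 - t / 4)" using False by simp
  finally show ?thesis .
qed

lemma poly_exp_bound: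
  fixes e t :: real
  assumes "0 < e" "0 \<le> t"
  shows "t ^ n * exp (- e * t) \<le> fact n / e ^ n"
proof -
  have "(e * t) ^ n / fact n \<le> exp (e * t)" by (rule pow_exp_bound) (use assms in simp)
  then have "e ^ n * t ^ n \<le> fact n * exp (e * t)" by (simp add: power_mult_distrib field_simps)
  then have "e ^ n * (t ^ n * exp (- e * t)) \<le> fact n"
    by (simp add: exp_minus field_simps)
  then show ?thesis using assms by (simp add: field_simps mult.commute)
qed

lemma LI:
  fixes \<nu> :: "real \<Rightarrow> real"
  assumes INT: "\<And>x. 0 < x \<Longrightarrow> integrable lborel (\<lambda>t. indicator {0<..} t * (exp (- x * t) * \<nu> t))"
    and x: "0 < x" and phi: "\<phi> \<in> borel_measurable borel" and bd: "\<And>t. 0 < t \<Longrightarrow> \<bar>\<phi> t\<bar> \<le> C"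
  shows "integrable lborel (\<lambda>t. indicator {0<..} t * (\<phi> t * (exp (- x * t) * \<nu> t)))"
proof (rule Bochner_Integration.integrable_bound)
  show "integrable lborel (\<lambda>t. C * (indicator {0<..} t * (exp (- x * t) * \<nu> t)))"
    using INT[OF x] by (rule integrable_mult_right)
  have m: "(\<lambda>t. indicator {0<..} t * (exp (- x * t) * \<nu> t)) \<in> borel_measurable lborel"
    using INT[OF x] by (rule borel_measurable_integrable)
  have "(\<lambda>t. \<phi> t * (indicator {0<..} t * (exp (- x * t) * \<nu> t))) \<in> borel_measurable lborel"
    using phi m by measurable
  then show "(\<lambda>t. indicator {0<..} t * (\<phi> t * (exp (- x * t) * \<nu> t))) \<in> borel_measurable lborel"
    by (simp add: mult.commute mult.left_commute)
  show "AE t in lborel. norm (indicator {0<..} t * (\<phi> t * (exp (- x * t) * \<nu> t)))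
       \<le> norm (C * (indicator {0<..} t * (exp (- x * t) * \<nu> t)))"
  proof (rule AE_I2)
    fix t :: real
    show "norm (indicator {0<..} t * (\<phi> t * (exp (- x * t) * \<nu> t)))
       \<le> norm (C * (indicator {0<..} t * (exp (- x * t) * \<nu> t)))"
    proof (cases "0 < t")
      case True
      have "\<bar>\<phi> t\<bar> * \<bar>exp (- x * t) * \<nu> t\<bar> \<le> \<bar>C\<bar> * \<bar>exp (- x * t) * \<nu> t\<bar>"
        using bd[OF True] by (intro mult_right_mono) auto
      then show ?thesis using True by (simp add: abs_mult)
    qed simp
  qed
qed

definition GG :: "(real \<Rightarrow> real) \<Rightarrow> nat \<Rightarrow> real \<Rightarrow> real" where
  "GG \<nu> n x = integral\<^sup>L lborel (\<lambda>t. indicator {0<..} t * ((- t) ^ n * (exp (- x * t) * \<nu> t)))"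

lemma GG_int:
  fixes \<nu> :: "real \<Rightarrow> real"
  assumes INT: "\<And>x. 0 < x \<Longrightarrow> integrable lborel (\<lambda>t. indicator {0<..} t * (exp (- x * t) * \<nu> t))"
    and x: "0 < x"
  shows "integrable lborel (\<lambda>t. indicator {0<..} t * ((- t) ^ n * (exp (- x * t) * \<nu> t)))"
proof -
  have "integrable lborel (\<lambda>t. indicator {0<..} t * (((- t) ^ n * exp (- (x/2) * t)) * (exp (- (x/2) * t) * \<nu> t)))"
  proof (rule LI[OF INT])
    show "0 < x / 2" using x by simp
    show "(\<lambda>t. (- t) ^ n * exp (- (x / 2) * t)) \<in> borel_measurable borel" by measurable
    fix t :: real assume "0 < t"
    then show "\<bar>(- t) ^ n * exp (- (x / 2) * t)\<bar> \<le> fact n / (x/2) ^ n"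
      using poly_exp_bound[of "x/2" t n] x by (simp add: abs_mult power_abs)
  qed
  moreover have "\<And>t. ((- t) ^ n * exp (- (x/2) * t)) * (exp (- (x/2) * t) * \<nu> t) = (- t) ^ n * (exp (- x * t) * \<nu> t)"
  proof -
    fix t
    have "exp (- (x/2) * t) * exp (- (x/2) * t) = exp (- x * t)" by (subst mult_exp_exp) simp
    then show "((- t) ^ n * exp (- (x/2) * t)) * (exp (- (x/2) * t) * \<nu> t) = (- t) ^ n * (exp (- x * t) * \<nu> t)"
      by (metis mult.assoc mult.left_commute)
  qed
  ultimately show ?thesis by (simp only:)
qed

lemma GG_int2:
  fixes \<nu> :: "real \<Rightarrow> real"
  assumes INT: "\<And>x. 0 < x \<Longrightarrow> integrable lborel (\<lambda>t. indicator {0<..} t * (exp (- x * t) * \<nu> t))"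
    and x: "0 < x"
  shows "integrable lborel (\<lambda>t. indicator {0<..} t * (t ^ n * (exp (- x * t) * \<nu> t)))"
proof -
  have "integrable lborel (\<lambda>t. (-1) ^ n * (indicator {0<..} t * ((- t) ^ n * (exp (- x * t) * \<nu> t))))"
    by (intro integrable_mult_right GG_int[OF INT x])
  moreover have "\<And>t. (-1) ^ n * (indicator {0<..} t * ((- t) ^ n * (exp (- x * t) * \<nu> t)))
     = indicator {0<..} t * (t ^ n * (exp (- x * t) * \<nu> t))"
  proof -
    fix t :: real
    have "(-1::real) ^ n * (- t) ^ n = t ^ n" by (simp flip: power_mult_distrib)
    then show "(-1) ^ n * (indicator {0<..} t * ((- t) ^ n * (exp (- x * t) * \<nu> t)))
     = indicator {0<..} t * (t ^ n * (exp (- x * t) * \<nu> t))"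
      by (metis (no_types, lifting) mult.assoc mult.left_commute)
  qed
  ultimately show ?thesis by (simp only:)
qed

lemma exp_taylor1: fixes z :: real shows "\<bar>exp z - 1 - z\<bar> \<le> exp \<bar>z\<bar> * z\<^sup>2"
proof -
  have a: "0 \<le> exp z - 1 - z" using exp_ge_add_one_self[of z] by linarith
  have b: "exp z - (1 + z) \<le> exp \<bar>z\<bar> * z\<^sup>2" using Taylor_exp_field[of z 1] by (simp add: power2_eq_square)
  show ?thesis by (simp only: abs_of_nonneg[OF a]) (use b in linarith)
qed

lemma GG_key:
  fixes \<nu> :: "real \<Rightarrow> real"
  assumes INT: "\<And>x. 0 < x \<Longrightarrow> integrable lborel (\<lambda>t. indicator {0<..} t * (exp (- x * t) * \<nu> t))"
    and nn: "\<And>t. 0 < t \<Longrightarrow> 0 \<le> \<nu> t"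
    and x: "0 < x" and y: "\<bar>y - x\<bar> \<le> x / 2"
  shows "\<bar>GG \<nu> n y - GG \<nu> n x - (y - x) * GG \<nu> (Suc n) x\<bar>
     \<le> (y - x)\<^sup>2 * integral\<^sup>L lborel (\<lambda>t. indicator {0<..} t * (t ^ (n+2) * (exp (- (x/2) * t) * \<nu> t)))"
proof -
  define h where "h = y - x"
  have y0: "0 < y" using x y abs_le_iff[of "y-x" "x/2"] by linarith
  let ?F1 = "\<lambda>t. indicator {0<..} t * ((- t) ^ n * (exp (- y * t) * \<nu> t))"
  let ?F2 = "\<lambda>t. indicator {0<..} t * ((- t) ^ n * (exp (- x * t) * \<nu> t))"
  let ?F3 = "\<lambda>t. indicator {0<..} t * ((- t) ^ (Suc n) * (exp (- x * t) * \<nu> t))"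
  let ?B = "\<lambda>t. indicator {0<..} t * (t ^ (n+2) * (exp (- (x/2) * t) * \<nu> t))"
  have i1: "integrable lborel ?F1" by (rule GG_int[OF INT y0])
  have i2: "integrable lborel ?F2" by (rule GG_int[OF INT x])
  have i3: "integrable lborel ?F3" by (rule GG_int[OF INT x])
  have half: "0 < x / 2" using x by simp
  have iB: "integrable lborel ?B" by (rule GG_int2[OF INT half])
  have eqI: "GG \<nu> n y - GG \<nu> n x - h * GG \<nu> (Suc n) x = integral\<^sup>L lborel (\<lambda>t. ?F1 t - ?F2 t - h * ?F3 t)"
    using i1 i2 i3 by (simp add: GG_def)
  have bd: "\<bar>integral\<^sup>L lborel (\<lambda>t. ?F1 t - ?F2 t - h * ?F3 t)\<bar> \<le> integral\<^sup>L lborel (\<lambda>t. h\<^sup>2 * ?B t)"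
  proof (rule integral_abs_bound_integral)
    show "integrable lborel (\<lambda>t. ?F1 t - ?F2 t - h * ?F3 t)" using i1 i2 i3 by simp
    show "integrable lborel (\<lambda>t. h\<^sup>2 * ?B t)" using iB by simp
    fix t :: real
    show "\<bar>?F1 t - ?F2 t - h * ?F3 t\<bar> \<le> h\<^sup>2 * ?B t"
    proof (cases "0 < t")
      case True
      have e1: "exp (- y * t) = exp (- x * t) * exp (- h * t)"
        by (simp add: h_def mult_exp_exp algebra_simps)
      have "?F1 t - ?F2 t - h * ?F3 t = (- t) ^ n * (exp (- y * t) * \<nu> t) - (- t) ^ n * (exp (- x * t) * \<nu> t)
           - h * ((- t) ^ Suc n * (exp (- x * t) * \<nu> t))"
        using True by simp
      also have "\<dots> = (- t) ^ n * \<nu> t * exp (- x * t) * (exp (- h * t) - 1 - (- h * t))"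
        by (simp only: e1) (simp add: algebra_simps)
      also have "\<bar>\<dots>\<bar> = t ^ n * \<nu> t * exp (- x * t) * \<bar>exp (- h * t) - 1 - (- h * t)\<bar>"
        using True nn[OF True] by (simp add: abs_mult power_abs)
      also have "\<dots> \<le> t ^ n * \<nu> t * exp (- x * t) * (exp \<bar>- h * t\<bar> * (- h * t)\<^sup>2)"
        using True nn[OF True] by (intro mult_left_mono exp_taylor1) auto
      also have "\<dots> = h\<^sup>2 * (t ^ (n+2) * \<nu> t * (exp (- x * t) * exp (\<bar>h\<bar> * t)))"
        using True by (simp add: abs_mult power2_eq_square algebra_simps)
      also have "\<dots> \<le> h\<^sup>2 * (t ^ (n+2) * \<nu> t * exp (- (x/2) * t))"
      proof -
        have "- x * t + \<bar>h\<bar> * t \<le> - (x/2) * t"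
          using True y by (simp add: h_def algebra_simps mult_right_mono)
        then have "exp (- x * t) * exp (\<bar>h\<bar> * t) \<le> exp (- (x/2) * t)" by (simp add: mult_exp_exp)
        then show ?thesis using True nn[OF True] by (intro mult_left_mono) auto
      qed
      also have "\<dots> = h\<^sup>2 * ?B t" using True by (simp add: algebra_simps)
      finally show ?thesis .
    qed simp
  qed
  have "integral\<^sup>L lborel (\<lambda>t. h\<^sup>2 * ?B t) = h\<^sup>2 * integral\<^sup>L lborel ?B" by (rule integral_mult_right_zero)
  then have "\<bar>GG \<nu> n y - GG \<nu> n x - h * GG \<nu> (Suc n) x\<bar> \<le> h\<^sup>2 * integral\<^sup>L lborel ?B"
    using eqI bd by simp
  then show ?thesis by (simp only: h_def)
qed

lemma GG_deriv:
  fixes \<nu> :: "real \<Rightarrow> real"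
  assumes INT: "\<And>x. 0 < x \<Longrightarrow> integrable lborel (\<lambda>t. indicator {0<..} t * (exp (- x * t) * \<nu> t))"
    and nn: "\<And>t. 0 < t \<Longrightarrow> 0 \<le> \<nu> t"
    and x: "0 < x"
  shows "(GG \<nu> n has_real_derivative GG \<nu> (Suc n) x) (at x)"
proof -
  define B where "B = integral\<^sup>L lborel (\<lambda>t. indicator {0<..} t * (t ^ (n+2) * (exp (- (x/2) * t) * \<nu> t)))"
  have "((\<lambda>y. (GG \<nu> n y - GG \<nu> n x) / (y - x) - GG \<nu> (Suc n) x) \<longlongrightarrow> 0) (at x)"
  proof (rule Lim_null_comparison)
    show "\<forall>\<^sub>F y in at x. norm ((GG \<nu> n y - GG \<nu> n x) / (y - x) - GG \<nu> (Suc n) x) \<le> \<bar>y - x\<bar> * B"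
      unfolding eventually_at
    proof (intro exI[of _ "x/2"] conjI ballI impI)
      show "0 < x / 2" using x by simp
      fix y assume "y \<noteq> x \<and> dist y x < x / 2"
      then have yx: "y \<noteq> x" "\<bar>y - x\<bar> \<le> x / 2" by (auto simp: dist_real_def)
      have "norm ((GG \<nu> n y - GG \<nu> n x) / (y - x) - GG \<nu> (Suc n) x)
          = norm ((GG \<nu> n y - GG \<nu> n x - (y - x) * GG \<nu> (Suc n) x) / (y - x))"
        using yx by (simp add: field_simps)
      also have "\<dots> = \<bar>GG \<nu> n y - GG \<nu> n x - (y - x) * GG \<nu> (Suc n) x\<bar> / \<bar>y - x\<bar>"
        by (simp add: abs_divide)
      also have "\<dots> \<le> (y - x)\<^sup>2 * B / \<bar>y - x\<bar>"
        using GG_key[OF INT nn x yx(2), of n] yx by (intro divide_right_mono) (auto simp: B_def)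
      also have "\<dots> = \<bar>y - x\<bar> * B" using yx by (simp add: power2_eq_square field_simps abs_mult_self_eq)
      finally show "norm ((GG \<nu> n y - GG \<nu> n x) / (y - x) - GG \<nu> (Suc n) x) \<le> \<bar>y - x\<bar> * B" .
    qed
    have "((\<lambda>y. \<bar>y - x\<bar> * B) \<longlongrightarrow> \<bar>x - x\<bar> * B) (at x)"
      by (intro tendsto_intros)
    then show "((\<lambda>y. \<bar>y - x\<bar> * B) \<longlongrightarrow> 0) (at x)" by simp
  qed
  then show ?thesis by (simp add: has_field_derivative_iff LIM_zero_iff)
qed

lemma deriv_GG:
  fixes \<nu> f :: "real \<Rightarrow> real"
  assumes INT: "\<And>x. 0 < x \<Longrightarrow> integrable lborel (\<lambda>t. indicator {0<..} t * (exp (- x * t) * \<nu> t))"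
    and nn: "\<And>t. 0 < t \<Longrightarrow> 0 \<le> \<nu> t"
    and f: "\<And>x. 0 < x \<Longrightarrow> f x = GG \<nu> 0 x"
  shows "0 < x \<Longrightarrow> (deriv ^^ n) f x = GG \<nu> n x"
proof (induction n arbitrary: x)
  case 0
  then show ?case using f by simp
next
  case (Suc n)
  have ev: "eventually (\<lambda>y. (deriv ^^ n) f y = GG \<nu> n y) (nhds x)"
  proof -
    have "eventually (\<lambda>y. y \<in> {0<..}) (nhds x)"
      by (rule eventually_nhds_in_open) (use Suc.prems in auto)
    then show ?thesis by eventually_elim (use Suc.IH in auto)
  qed
  have "(deriv ^^ Suc n) f x = deriv ((deriv ^^ n) f) x" by simp
  also have "\<dots> = deriv (GG \<nu> n) x" by (rule deriv_cong_ev[OF ev refl])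
  also have "\<dots> = GG \<nu> (Suc n) x" by (rule DERIV_imp_deriv[OF GG_deriv[OF INT nn Suc.prems]])
  finally show ?case .
qed

definition AA :: "(real \<Rightarrow> real) \<Rightarrow> nat \<Rightarrow> real \<Rightarrow> real" where
  "AA \<nu> k x = integral\<^sup>L lborel (\<lambda>t. indicator {0<..} t * (pk k (x * t) * \<nu> t))"

lemma AA_integrand:
  "(-x) ^ k / fact k * (indicator {0<..} t * ((- t) ^ k * (exp (- x * t) * \<nu> t)))
   = indicator {0<..} t * (pk k (x * t) * \<nu> t)"
proof -
  have "(-x) ^ k * (- t) ^ k = (x * t) ^ k" by (simp flip: power_mult_distrib)
  then show ?thesis by (simp add: pk_def field_simps)
qed

lemma AA_int:
  fixes \<nu> :: "real \<Rightarrow> real"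
  assumes INT: "\<And>x. 0 < x \<Longrightarrow> integrable lborel (\<lambda>t. indicator {0<..} t * (exp (- x * t) * \<nu> t))"
    and x: "0 < x"
  shows "integrable lborel (\<lambda>t. indicator {0<..} t * (pk k (x * t) * \<nu> t))"
proof -
  have "integrable lborel (\<lambda>t. (-x) ^ k / fact k * (indicator {0<..} t * ((- t) ^ k * (exp (- x * t) * \<nu> t))))"
    by (intro integrable_mult_right GG_int[OF INT x])
  then show ?thesis by (simp only: AA_integrand)
qed

lemma AA_GG:
  "(-x) ^ k * GG \<nu> k x / fact k = AA \<nu> k x"
proof -
  have "(-x) ^ k * GG \<nu> k x / fact k = (-x) ^ k / fact k * GG \<nu> k x" by simp
  also have "\<dots> = integral\<^sup>L lborel (\<lambda>t. (-x) ^ k / fact k * (indicator {0<..} t * ((- t) ^ k * (exp (- x * t) * \<nu> t))))"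
    unfolding GG_def by (rule integral_mult_right_zero[symmetric])
  also have "\<dots> = AA \<nu> k x" unfolding AA_def by (simp only: AA_integrand)
  finally show ?thesis .
qed

lemma window_sum:
  fixes \<nu> :: "real \<Rightarrow> real"
  assumes INT: "\<And>x. 0 < x \<Longrightarrow> integrable lborel (\<lambda>t. indicator {0<..} t * (exp (- x * t) * \<nu> t))"
    and x: "0 < x"
  shows "integral\<^sup>L lborel (\<lambda>t. indicator {0<..} t * ((PP (m + L) (x * t) - PP m (x * t)) * \<nu> t))
     = (\<Sum>j<L. AA \<nu> (m + j) x)"
proof -
  have "(\<lambda>t. indicator {0<..} t * ((PP (m + L) (x * t) - PP m (x * t)) * \<nu> t))
     = (\<lambda>t. \<Sum>j<L. indicator {0<..} t * (pk (m + j) (x * t) * \<nu> t))"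
    by (simp add: PP_window sum_distrib_left sum_distrib_right)
  then have "integral\<^sup>L lborel (\<lambda>t. indicator {0<..} t * ((PP (m + L) (x * t) - PP m (x * t)) * \<nu> t))
     = integral\<^sup>L lborel (\<lambda>t. \<Sum>j<L. indicator {0<..} t * (pk (m + j) (x * t) * \<nu> t))"
    by (simp only:)
  also have "\<dots> = (\<Sum>j<L. integral\<^sup>L lborel (\<lambda>t. indicator {0<..} t * (pk (m + j) (x * t) * \<nu> t)))"
    using Bochner_Integration.integral_sum[where I="{..<L}" and M=lborel and f="\<lambda>j t. indicator {0<..} t * (pk (m + j) (x * t) * \<nu> t)"] AA_int[OF INT x]
    by simp
  also have "\<dots> = (\<Sum>j<L. AA \<nu> (m + j) x)" by (simp add: AA_def)
  finally show ?thesis .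
qed

lemma MEAS:
  fixes \<nu> :: "real \<Rightarrow> real"
  assumes INT: "\<And>x. 0 < x \<Longrightarrow> integrable lborel (\<lambda>t. indicator {0<..} t * (exp (- x * t) * \<nu> t))"
    and phi: "\<phi> \<in> borel_measurable borel"
  shows "(\<lambda>t. indicator {0<..} t * (\<phi> t * \<nu> t)) \<in> borel_measurable lborel"
proof -
  have m: "(\<lambda>t. indicator {0<..} t * (exp (- 1 * t) * \<nu> t)) \<in> borel_measurable lborel"
    using INT[of 1] by (intro borel_measurable_integrable) simp
  have "(\<lambda>t. (\<phi> t * exp t) * (indicator {0<..} t * (exp (- 1 * t) * \<nu> t))) \<in> borel_measurable lborel"
    using phi m by measurable
  moreover have "\<And>t. (\<phi> t * exp t) * (indicator {0<..} t * (exp (- 1 * t) * \<nu> t)) = indicator {0<..} t * (\<phi> t * \<nu> t)"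
    by (simp add: exp_minus field_simps)
  ultimately show ?thesis by (simp only:)
qed

lemma PP_meas: "(\<lambda>t. PP K (c * t)) \<in> borel_measurable borel"
  unfolding PP_def pk_def by measurable

lemma ceil_bounds:
  assumes "0 \<le> y" shows "y \<le> real (nat \<lceil>y\<rceil>)" "real (nat \<lceil>y\<rceil>) \<le> y + 1"
proof -
  have "0 \<le> \<lceil>y\<rceil>" using assms by simp
  then have e: "real (nat \<lceil>y\<rceil>) = real_of_int \<lceil>y\<rceil>" by simp
  show "y \<le> real (nat \<lceil>y\<rceil>)" unfolding e by (rule le_of_int_ceiling)
  show "real (nat \<lceil>y\<rceil>) \<le> y + 1" unfolding e using of_int_ceiling_le_add_one[of y] by simp
qed

lemma ceil_abs:
  assumes "0 \<le> y" shows "\<bar>real (nat \<lceil>y\<rceil>) - y\<bar> \<le> 1"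
  using ceil_bounds[OF assms] by (simp only: abs_le_iff) linarith

lemma window_lim:
  fixes \<nu> :: "real \<Rightarrow> real"
  assumes INT: "\<And>x. 0 < x \<Longrightarrow> integrable lborel (\<lambda>t. indicator {0<..} t * (exp (- x * t) * \<nu> t))"
    and nn: "\<And>t. 0 < t \<Longrightarrow> 0 \<le> \<nu> t"
    and c: "0 \<le> c" and h: "0 < h"
  defines "M \<equiv> \<lambda>n::nat. nat \<lceil>real n * c\<rceil>"
  defines "K \<equiv> \<lambda>n::nat. nat \<lceil>real n * c\<rceil> + nat \<lceil>real n * h\<rceil>"
  shows "(\<lambda>n. integral\<^sup>L lborel (\<lambda>t. indicator {0<..} t * ((PP (K n) (real n * t) - PP (M n) (real n * t)) * \<nu> t)))
     \<longlonglongrightarrow> integral\<^sup>L lborel (\<lambda>t. indicator {c<..c+h} t * \<nu> t)"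
proof -
  define d where "d = c + h"
  have d0: "0 \<le> d" "c < d" using c h by (auto simp: d_def)
  have Mb: "\<bar>real (M n) - real n * c\<bar> \<le> 2" for n
  proof -
    have "\<bar>real (M n) - real n * c\<bar> \<le> 1" unfolding M_def by (rule ceil_abs) (use c in simp)
    then show ?thesis by linarith
  qed
  have Kb: "\<bar>real (K n) - real n * d\<bar> \<le> 2" for n
  proof -
    have 1: "\<bar>real (nat \<lceil>real n * c\<rceil>) - real n * c\<bar> \<le> 1" by (rule ceil_abs) (use c in simp)
    have 2: "\<bar>real (nat \<lceil>real n * h\<rceil>) - real n * h\<bar> \<le> 1" by (rule ceil_abs) (use h in simp)
    have e: "real (K n) - real n * d = (real (nat \<lceil>real n * c\<rceil>) - real n * c) + (real (nat \<lceil>real n * h\<rceil>) - real n * h)"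
      by (simp add: K_def d_def algebra_simps)
    show ?thesis unfolding e
      using abs_triangle_ineq[of "real (nat \<lceil>real n * c\<rceil>) - real n * c" "real (nat \<lceil>real n * h\<rceil>) - real n * h"] 1 2
      by linarith
  qed
  have MK: "M n \<le> K n" for n by (simp add: M_def K_def)
  have K0: "K 0 = M 0" by (simp add: M_def K_def)
  let ?s = "\<lambda>n t. indicator {0<..} t * ((PP (K n) (real n * t) - PP (M n) (real n * t)) * \<nu> t)"
  let ?f = "\<lambda>t. indicator {0<..} t * (indicator {c<..d} t * \<nu> t)"
  let ?w = "\<lambda>t. exp (d + 2) * (indicator {0<..} t * (exp (- (1/4) * t) * \<nu> t))"
  have "(\<lambda>n. integral\<^sup>L lborel (?s n)) \<longlonglongrightarrow> integral\<^sup>L lborel ?f"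
  proof (rule integral_dominated_convergence)
    show "?f \<in> borel_measurable lborel" by (rule MEAS[OF INT]) measurable
    show "?s n \<in> borel_measurable lborel" for n
    proof -
      have pm: "(\<lambda>t. PP (K n) (real n * t) - PP (M n) (real n * t)) \<in> borel_measurable borel"
        by (intro borel_measurable_diff PP_meas)
      show ?thesis by (rule MEAS[OF INT pm]) auto
    qed
    show "integrable lborel ?w" by (intro integrable_mult_right INT) simp
    show "AE t in lborel. (\<lambda>n. ?s n t) \<longlonglongrightarrow> ?f t"
    proof -
      have "AE t in lborel. t \<noteq> c \<and> t \<noteq> d" using AE_lborel_singleton[of c] AE_lborel_singleton[of d]
        by eventually_elim auto
      then show ?thesis
      proof eventually_elim
        case (elim t)
        show ?case
        proof (cases "0 < t")
          case True
          have "(\<lambda>n. PP (K n) (real n * t) - PP (M n) (real n * t)) \<longlonglongrightarrow> indicator {c<..d} t"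
            by (rule WL[OF True c d0(2)]) (use elim Kb Mb MK in auto)
          then show ?thesis by (intro tendsto_mult tendsto_const)
        qed simp
      qed
    qed
    show "AE t in lborel. norm (?s n t) \<le> ?w t" for n
    proof (rule AE_I2)
      fix t :: real
      show "norm (?s n t) \<le> ?w t"
      proof (cases "0 < t \<and> 1 \<le> n")
        case True
        have a: "0 \<le> PP (K n) (real n * t) - PP (M n) (real n * t)"
          using PP_mono[OF _ MK[of n], of "real n * t"] True by simp
        have "PP (K n) (real n * t) - PP (M n) (real n * t) \<le> PP (K n) (real n * t)"
          using PP_nonneg[of "real n * t" "M n"] True by simp
        also have "\<dots> \<le> exp (d + 2 - t / 4)"
          by (rule DOM) (use True d0 Kb[of n] in \<open>auto simp: abs_le_iff\<close>)
        also have "\<dots> = exp (d + 2) * exp (- (1/4) * t)" by (subst mult_exp_exp, rule arg_cong[where f=exp], simp)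
        finally have b: "PP (K n) (real n * t) - PP (M n) (real n * t) \<le> exp (d + 2) * exp (- (1/4) * t)" .
        have "norm (?s n t) = (PP (K n) (real n * t) - PP (M n) (real n * t)) * \<nu> t"
          using True a nn[of t] by (simp add: abs_mult)
        also have "\<dots> \<le> exp (d + 2) * exp (- (1/4) * t) * \<nu> t"
          using b nn[of t] True by (intro mult_right_mono) auto
        also have "\<dots> = ?w t" using True by simp
        finally show ?thesis .
      next
        case False
        then consider "\<not> 0 < t" | "n = 0" by linarith
        then show ?thesis
        proof cases
          case 1 then show ?thesis by simp
        next
          case 2
          have "0 \<le> ?w t" using nn[of t] by (cases "0 < t") auto
          then show ?thesis using 2 K0 by simp
        qed
      qed
    qed
  qed
  moreover have "integral\<^sup>L lborel ?f = integral\<^sup>L lborel (\<lambda>t. indicator {c<..c+h} t * \<nu> t)"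
    by (rule Bochner_Integration.integral_cong) (use c in \<open>auto simp: d_def indicator_def\<close>)
  ultimately show ?thesis by simp
qed

lemma window_ineq:
  fixes \<nu> :: "real \<Rightarrow> real"
  assumes INT: "\<And>x. 0 < x \<Longrightarrow> integrable lborel (\<lambda>t. indicator {0<..} t * (exp (- x * t) * \<nu> t))"
    and nn: "\<And>t. 0 < t \<Longrightarrow> 0 \<le> \<nu> t"
    and mono: "\<And>x k. l0 < x \<Longrightarrow> AA \<nu> (Suc k) x \<le> AA \<nu> k x"
    and l0: "0 \<le> l0"
    and ab: "0 \<le> a" "a \<le> b" and h: "0 < h"
  shows "integral\<^sup>L lborel (\<lambda>t. indicator {b<..b+h} t * \<nu> t) \<le> integral\<^sup>L lborel (\<lambda>t. indicator {a<..a+h} t * \<nu> t)"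
proof -
  have b0: "0 \<le> b" using ab by linarith
  define M where "M = (\<lambda>n::nat. nat \<lceil>real n * a\<rceil>)"
  define M' where "M' = (\<lambda>n::nat. nat \<lceil>real n * b\<rceil>)"
  define L where "L = (\<lambda>n::nat. nat \<lceil>real n * h\<rceil>)"
  have la: "(\<lambda>n. integral\<^sup>L lborel (\<lambda>t. indicator {0<..} t * ((PP (M n + L n) (real n * t) - PP (M n) (real n * t)) * \<nu> t)))
     \<longlonglongrightarrow> integral\<^sup>L lborel (\<lambda>t. indicator {a<..a+h} t * \<nu> t)"
    unfolding M_def L_def by (rule window_lim[OF INT nn ab(1) h])
  have lb: "(\<lambda>n. integral\<^sup>L lborel (\<lambda>t. indicator {0<..} t * ((PP (M' n + L n) (real n * t) - PP (M' n) (real n * t)) * \<nu> t)))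
     \<longlonglongrightarrow> integral\<^sup>L lborel (\<lambda>t. indicator {b<..b+h} t * \<nu> t)"
    unfolding M'_def L_def by (rule window_lim[OF INT nn b0 h])
  obtain N where N: "l0 < real N" using reals_Archimedean2 by blast
  have ev: "eventually (\<lambda>n. integral\<^sup>L lborel (\<lambda>t. indicator {0<..} t * ((PP (M' n + L n) (real n * t) - PP (M' n) (real n * t)) * \<nu> t))
     \<le> integral\<^sup>L lborel (\<lambda>t. indicator {0<..} t * ((PP (M n + L n) (real n * t) - PP (M n) (real n * t)) * \<nu> t))) sequentially"
  proof (rule eventually_sequentiallyI[of N])
    fix n assume "N \<le> n"
    then have xn: "l0 < real n" using N by linarith
    then have x0: "0 < real n" using l0 by linarith
    have anti: "AA \<nu> k' (real n) \<le> AA \<nu> k (real n)" if "k \<le> k'" for k k'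
      using that
    proof (induction k' rule: dec_induct)
      case (step m)
      then show ?case using mono[OF xn, of m] by linarith
    qed simp
    have MM: "M n \<le> M' n" unfolding M_def M'_def
      using ab by (intro nat_mono ceiling_mono mult_left_mono) auto
    show "integral\<^sup>L lborel (\<lambda>t. indicator {0<..} t * ((PP (M' n + L n) (real n * t) - PP (M' n) (real n * t)) * \<nu> t))
     \<le> integral\<^sup>L lborel (\<lambda>t. indicator {0<..} t * ((PP (M n + L n) (real n * t) - PP (M n) (real n * t)) * \<nu> t))"
      using window_sum[OF INT x0, where m="M' n" and L="L n"] window_sum[OF INT x0, where m="M n" and L="L n"]
        anti MM by (simp add: sum_mono)
  qed
  show ?thesis by (rule tendsto_le[OF _ la lb ev]) simp
qed

lemma ind_split:
  fixes t u v w :: real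
  assumes "u \<le> v" "v \<le> w"
  shows "indicator {u<..w} t = indicator {u<..v} t + (indicator {v<..w} t :: real)"
  using assms by (auto simp: indicator_def)

lemma ioc_add:
  fixes g :: "real \<Rightarrow> real"
  assumes int: "\<And>u v. a \<le> u \<Longrightarrow> integrable lborel (\<lambda>t. indicator {u<..v} t * g t)" and h: "0 \<le> h"
  shows "integral\<^sup>L lborel (\<lambda>t. indicator {a<..a + real k * h} t * g t)
       = (\<Sum>j<k. integral\<^sup>L lborel (\<lambda>t. indicator {a + real j * h<..a + real j * h + h} t * g t))"
proof (induction k)
  case 0
  then show ?case by simp
next
  case (Suc k)
  have "(\<lambda>t. indicator {a<..a + real (Suc k) * h} t * g t)
     = (\<lambda>t. indicator {a<..a + real k * h} t * g t + indicator {a + real k * h<..a + real k * h + h} t * g t)"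
  proof
    fix t
    have "indicator {a<..a + real (Suc k) * h} t = indicator {a<..a + real k * h} t + (indicator {a + real k * h<..a + real k * h + h} t :: real)"
      using ind_split[of a "a + real k * h" "a + real k * h + h" t] h by (simp add: algebra_simps)
    then show "indicator {a<..a + real (Suc k) * h} t * g t
       = indicator {a<..a + real k * h} t * g t + indicator {a + real k * h<..a + real k * h + h} t * g t"
      by (simp add: algebra_simps)
  qed
  then have "integral\<^sup>L lborel (\<lambda>t. indicator {a<..a + real (Suc k) * h} t * g t)
     = integral\<^sup>L lborel (\<lambda>t. indicator {a<..a + real k * h} t * g t)
       + integral\<^sup>L lborel (\<lambda>t. indicator {a + real k * h<..a + real k * h + h} t * g t)"
    using int[of a] int[of "a + real k * h"] h by simp
  then show ?case using Suc by simp
qed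

lemma ioc_mono_upper:
  fixes g :: "real \<Rightarrow> real"
  assumes "integrable lborel (\<lambda>t. indicator {u<..v} t * g t)" "integrable lborel (\<lambda>t. indicator {u<..v'} t * g t)"
    and "v \<le> v'" and "\<And>t. u < t \<Longrightarrow> t \<le> v' \<Longrightarrow> 0 \<le> g t"
  shows "integral\<^sup>L lborel (\<lambda>t. indicator {u<..v} t * g t) \<le> integral\<^sup>L lborel (\<lambda>t. indicator {u<..v'} t * g t)"
  by (rule integral_mono[OF assms(1,2)]) (use assms(3,4) in \<open>auto simp: indicator_def\<close>)

lemma ioc_const_bound:
  fixes g :: "real \<Rightarrow> real"
  assumes "integrable lborel (\<lambda>t. indicator {u<..v} t * g t)" "u \<le> v"
    and "\<And>t. u < t \<Longrightarrow> t \<le> v \<Longrightarrow> g t \<le> C"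
  shows "integral\<^sup>L lborel (\<lambda>t. indicator {u<..v} t * g t) \<le> (v - u) * C"
proof -
  have ic: "integrable lborel (\<lambda>t. indicator {u<..v} t * C)"
    using assms(2) by (intro integrable_mult_left integrable_real_indicator) auto
  have "integral\<^sup>L lborel (\<lambda>t. indicator {u<..v} t * g t) \<le> integral\<^sup>L lborel (\<lambda>t. indicator {u<..v} t * C)"
    by (rule integral_mono[OF assms(1) ic]) (use assms(3) in \<open>auto simp: indicator_def\<close>)
  also have "\<dots> = (v - u) * C" using assms(2) ic by simp
  finally show ?thesis .
qed

lemma ioc_const_bound2:
  fixes g :: "real \<Rightarrow> real"
  assumes "integrable lborel (\<lambda>t. indicator {u<..v} t * g t)" "u \<le> v"
    and "\<And>t. u < t \<Longrightarrow> t \<le> v \<Longrightarrow> C \<le> g t"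
  shows "(v - u) * C \<le> integral\<^sup>L lborel (\<lambda>t. indicator {u<..v} t * g t)"
proof -
  have ic: "integrable lborel (\<lambda>t. indicator {u<..v} t * C)"
    using assms(2) by (intro integrable_mult_left integrable_real_indicator) auto
  have "(v - u) * C = integral\<^sup>L lborel (\<lambda>t. indicator {u<..v} t * C)" using assms(2) ic by simp
  also have "\<dots> \<le> integral\<^sup>L lborel (\<lambda>t. indicator {u<..v} t * g t)"
    by (rule integral_mono[OF ic assms(1)]) (use assms(2,3) in \<open>auto simp: indicator_def\<close>)
  finally show ?thesis .
qed

definition Wd :: "(real \<Rightarrow> real) \<Rightarrow> real \<Rightarrow> real \<Rightarrow> real" where
  "Wd \<nu> s h = integral\<^sup>L lborel (\<lambda>t. indicator {s<..s + h} t * \<nu> t)"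

lemma hh_rel: "n \<le> m \<Longrightarrow> (1/2::real) ^ n = real (2 ^ (m - n)) * (1/2) ^ m"
proof -
  assume "n \<le> m"
  then have m: "m = n + (m - n)" by simp
  have "(1/2::real) ^ m = (1/2) ^ n * (1/2) ^ (m - n)" by (subst m) (simp only: power_add)
  moreover have "real (2 ^ (m - n)) * (1/2::real) ^ (m - n) = 1" by (simp add: power_one_over)
  ultimately have "real (2 ^ (m - n)) * (1/2::real) ^ m = (1/2) ^ n * (real (2 ^ (m - n)) * (1/2::real) ^ (m - n))"
    by (simp only: mult.left_commute)
  also have "\<dots> = (1/2) ^ n" by (simp only: \<open>real (2 ^ (m - n)) * (1/2::real) ^ (m - n) = 1\<close> mult_1_right)
  finally show ?thesis by (rule sym)
qed

lemma hh_two: "(1/2::real) ^ n * 2 ^ n = 1"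
  by (simp flip: power_mult_distrib)

lemma two_rel: "n \<le> m \<Longrightarrow> (2::real) ^ n * real (2 ^ (m - n)) = 2 ^ m"
  by (simp add: power_add[symmetric])

locale dens =
  fixes \<nu> :: "real \<Rightarrow> real"
  assumes IntI: "\<And>u v. 0 < u \<Longrightarrow> integrable lborel (\<lambda>t. indicator {u<..v} t * \<nu> t)"
    and nn: "\<And>t. 0 < t \<Longrightarrow> 0 \<le> \<nu> t"
    and WI: "\<And>a b h. 0 < a \<Longrightarrow> a \<le> b \<Longrightarrow> 0 < h \<Longrightarrow> Wd \<nu> b h \<le> Wd \<nu> a h"
begin

definition w :: "nat \<Rightarrow> real \<Rightarrow> real" where
  "w n s = 2 ^ n * Wd \<nu> s ((1/2) ^ n)"

definition mu :: "real \<Rightarrow> real" where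
  "mu t = (if 0 < t then (SUP n. w n t) else 0)"

lemma Wsplit:
  assumes "0 < s" "0 \<le> \<delta>"
  shows "Wd \<nu> s (real k * \<delta>) = (\<Sum>j<k. Wd \<nu> (s + real j * \<delta>) \<delta>)"
  unfolding Wd_def
proof (rule ioc_add)
  fix u v assume "s \<le> u"
  then show "integrable lborel (\<lambda>t. indicator {u<..v} t * \<nu> t)" using assms by (intro IntI) linarith
qed (use assms in simp)

lemma Wnn: assumes "0 < s" shows "0 \<le> Wd \<nu> s h"
  unfolding Wd_def by (rule Bochner_Integration.integral_nonneg) (use assms nn in \<open>auto simp: indicator_def\<close>)

lemma Wle_k:
  assumes "0 < s" "0 < \<delta>"
  shows "Wd \<nu> s (real k * \<delta>) \<le> real k * Wd \<nu> s \<delta>"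
proof -
  have "Wd \<nu> s (real k * \<delta>) = (\<Sum>j<k. Wd \<nu> (s + real j * \<delta>) \<delta>)" using Wsplit assms by simp
  also have "\<dots> \<le> (\<Sum>j<k. Wd \<nu> s \<delta>)"
  proof (rule sum_mono)
    fix j assume "j \<in> {..<k}"
    have le: "s \<le> s + real j * \<delta>" using assms by simp
    show "Wd \<nu> (s + real j * \<delta>) \<delta> \<le> Wd \<nu> s \<delta>" by (rule WI[OF assms(1) le assms(2)])
  qed
  finally show ?thesis by simp
qed

lemma Wge_k:
  assumes "0 < s" "0 < \<delta>"
  shows "real k * Wd \<nu> (s + real k * \<delta>) \<delta> \<le> Wd \<nu> s (real k * \<delta>)"
proof -
  have "real k * Wd \<nu> (s + real k * \<delta>) \<delta> = (\<Sum>j<k. Wd \<nu> (s + real k * \<delta>) \<delta>)" by simp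
  also have "\<dots> \<le> (\<Sum>j<k. Wd \<nu> (s + real j * \<delta>) \<delta>)"
  proof (rule sum_mono)
    fix j assume "j \<in> {..<k}"
    then have le: "s + real j * \<delta> \<le> s + real k * \<delta>" using assms by (simp add: mult_right_mono)
    have pos: "0 < s + real j * \<delta>" using assms by (intro add_pos_nonneg) auto
    show "Wd \<nu> (s + real k * \<delta>) \<delta> \<le> Wd \<nu> (s + real j * \<delta>) \<delta>" by (rule WI[OF pos le assms(2)])
  qed
  also have "\<dots> = Wd \<nu> s (real k * \<delta>)" using Wsplit assms by simp
  finally show ?thesis .
qed

lemma w_mono: assumes "0 < s" "n \<le> m" shows "w n s \<le> w m s"
proof -
  have "w n s = 2 ^ n * Wd \<nu> s (real (2 ^ (m - n)) * (1/2) ^ m)"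
    unfolding w_def by (subst hh_rel[OF assms(2)]) (rule refl)
  also have "\<dots> \<le> 2 ^ n * (real (2 ^ (m - n)) * Wd \<nu> s ((1/2) ^ m))"
    by (intro mult_left_mono Wle_k) (use assms in auto)
  also have "\<dots> = w m s" unfolding w_def using two_rel[OF assms(2)] by (simp add: mult.assoc[symmetric])
  finally show ?thesis .
qed

lemma w_anti: assumes "0 < s" "s \<le> s'" shows "w n s' \<le> w n s"
  unfolding w_def by (intro mult_left_mono WI) (use assms in auto)

lemma w_low: assumes "0 < s" "n \<le> m" shows "w m (s + (1/2) ^ n) \<le> w n s"
proof -
  have e: "(1/2::real) ^ n = real (2 ^ (m - n)) * (1/2) ^ m" using hh_rel[OF assms(2)] .
  have "real (2 ^ (m - n)) * Wd \<nu> (s + real (2 ^ (m - n)) * (1/2) ^ m) ((1/2) ^ m)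
      \<le> Wd \<nu> s (real (2 ^ (m - n)) * (1/2) ^ m)"
    by (rule Wge_k) (use assms in auto)
  then have "2 ^ n * (real (2 ^ (m - n)) * Wd \<nu> (s + (1/2) ^ n) ((1/2) ^ m)) \<le> 2 ^ n * Wd \<nu> s ((1/2) ^ n)"
    unfolding e[symmetric] by (intro mult_left_mono) auto
  moreover have "2 ^ n * (real (2 ^ (m - n)) * Wd \<nu> (s + (1/2) ^ n) ((1/2) ^ m)) = 2 ^ m * Wd \<nu> (s + (1/2) ^ n) ((1/2) ^ m)"
    by (simp only: mult.assoc[symmetric] two_rel[OF assms(2)])
  ultimately show ?thesis unfolding w_def by linarith
qed

lemma w_low': assumes "0 < s" shows "w m (s + (1/2) ^ n) \<le> w n s"
proof (cases "n \<le> m")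
  case True
  then show ?thesis using w_low assms by blast
next
  case False
  have hp: "0 < s + (1/2::real) ^ n" using assms by (simp add: add_pos_pos)
  have "w m (s + (1/2) ^ n) \<le> w n (s + (1/2) ^ n)" by (rule w_mono) (use hp False in auto)
  also have "\<dots> \<le> w n s" by (rule w_anti) (use assms in auto)
  finally show ?thesis .
qed

lemma w_bdd: assumes "0 < t" shows "bdd_above (range (\<lambda>n. w n t))"
proof -
  obtain m where m: "(1/2::real) ^ m < t" using real_arch_pow_inv[OF assms, of "1/2"] by auto
  define s where "s = t - (1/2) ^ m"
  have s0: "0 < s" using m by (simp add: s_def)
  have "w n t \<le> w m s" for n using w_low'[OF s0, of n m] by (simp add: s_def)
  then show ?thesis by (intro bdd_aboveI2) auto
qed

lemma mu_ge: "0 < t \<Longrightarrow> w n t \<le> mu t"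
  unfolding mu_def using w_bdd by (auto intro: cSUP_upper)

lemma mu_le: "0 < t \<Longrightarrow> (\<And>n. w n t \<le> B) \<Longrightarrow> mu t \<le> B"
  unfolding mu_def by (auto intro: cSUP_least)

lemma mu_anti: assumes "0 < s" "s \<le> t" shows "mu t \<le> mu s"
proof (rule mu_le)
  show "0 < t" using assms by simp
  fix n
  have "w n t \<le> w n s" by (rule w_anti) (use assms in auto)
  also have "\<dots> \<le> mu s" by (rule mu_ge) (use assms in auto)
  finally show "w n t \<le> mu s" .
qed

lemma mu_nn: "0 \<le> mu t"
proof (cases "0 < t")
  case True
  have "0 \<le> w 0 t" unfolding w_def using Wnn[OF True] by simp
  also have "\<dots> \<le> mu t" by (rule mu_ge[OF True])
  finally show ?thesis .
qed (simp add: mu_def)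

end

context dens begin

lemma W_up: assumes "0 < s" shows "Wd \<nu> s ((1/2) ^ n) \<le> (1/2) ^ n * mu s"
proof -
  have "Wd \<nu> s ((1/2) ^ n) = (1/2) ^ n * w n s" unfolding w_def by (simp only: mult.assoc[symmetric] hh_two mult_1)
  also have "\<dots> \<le> (1/2) ^ n * mu s"
    by (rule mult_left_mono[OF mu_ge[OF assms]]) simp
  finally show ?thesis .
qed

lemma W_low: assumes "0 < s" shows "(1/2) ^ n * mu (s + (1/2) ^ n) \<le> Wd \<nu> s ((1/2) ^ n)"
proof -
  have hp: "0 < s + (1/2::real) ^ n" using assms by (simp add: add_pos_pos)
  have "mu (s + (1/2) ^ n) \<le> w n s"
    by (rule mu_le[OF hp]) (rule w_low'[OF assms])
  then have "(1/2) ^ n * mu (s + (1/2) ^ n) \<le> (1/2) ^ n * w n s" by (rule mult_left_mono) simp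
  also have "\<dots> = Wd \<nu> s ((1/2) ^ n)" unfolding w_def by (simp only: mult.assoc[symmetric] hh_two mult_1)
  finally show ?thesis .
qed

lemma mu_int: assumes "0 < u" shows "integrable lborel (\<lambda>t. indicator {u<..v} t * mu t)"
proof -
  define mu' where "mu' t = mu (max t u)" for t
  have "mono (\<lambda>t. - mu' t)"
  proof (rule monoI)
    fix x y :: real assume "x \<le> y"
    then show "- mu' x \<le> - mu' y" unfolding mu'_def using assms
      by (intro le_imp_neg_le mu_anti) auto
  qed
  then have "(\<lambda>t. - mu' t) \<in> borel_measurable borel" by (rule borel_measurable_mono)
  then have m: "mu' \<in> borel_measurable borel" using borel_measurable_uminus[of "\<lambda>t. - mu' t"] by simp
  have eq: "(\<lambda>t. indicator {u<..v} t * mu t) = (\<lambda>t. indicator {u<..v} t * mu' t)"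
    by (auto simp: mu'_def indicator_def max_def)
  show ?thesis unfolding eq
  proof (rule Bochner_Integration.integrable_bound)
    show "integrable lborel (\<lambda>t. indicator {u<..v} t * mu u)"
      by (cases "u \<le> v") (auto intro!: integrable_mult_left integrable_real_indicator)
    show "(\<lambda>t. indicator {u<..v} t * mu' t) \<in> borel_measurable lborel" using m by measurable
    show "AE t in lborel. norm (indicator {u<..v} t * mu' t) \<le> norm (indicator {u<..v} t * mu u)"
    proof (rule AE_I2)
      fix t :: real
      show "norm (indicator {u<..v} t * mu' t) \<le> norm (indicator {u<..v} t * mu u)"
        using mu_anti[OF assms, of t] mu_nn[of t] mu_nn[of u]
        by (auto simp: indicator_def mu'_def max_def)
    qed
  qed
qed

lemma riemann:
  assumes a: "0 < a" and ab: "a \<le> b"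
  shows "\<bar>integral\<^sup>L lborel (\<lambda>t. indicator {a<..b} t * mu t) - integral\<^sup>L lborel (\<lambda>t. indicator {a<..b} t * \<nu> t)\<bar>
     \<le> (1/2) ^ n * mu a"
proof -
  define h where "h = (1/2::real) ^ n"
  have h0: "0 < h" by (simp add: h_def)
  define N where "N = nat \<lfloor>(b - a) / h\<rfloor>"
  have fl0: "0 \<le> \<lfloor>(b - a) / h\<rfloor>" using ab h0 by simp
  have rN: "real N = real_of_int \<lfloor>(b - a) / h\<rfloor>" unfolding N_def using fl0 by simp
  have "real N \<le> (b - a) / h" unfolding rN by (rule of_int_floor_le)
  then have N1: "a + real N * h \<le> b" using h0 by (simp add: field_simps)
  have "(b - a) / h < real N + 1" unfolding rN by (rule real_of_int_floor_add_one_gt)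
  then have N2: "b \<le> a + real (Suc N) * h" using h0 by (simp add: field_simps)
  have pos: "0 < a + real j * h" for j using a h0 by (intro add_pos_nonneg) auto
  have intn: "integrable lborel (\<lambda>t. indicator {a<..x} t * \<nu> t)" for x using IntI[OF a] .
  have intm: "integrable lborel (\<lambda>t. indicator {a<..x} t * mu t)" for x using mu_int[OF a] .
  define U where "U = (\<Sum>j<Suc N. h * mu (a + real j * h))"
  define L where "L = (\<Sum>j<N. h * mu (a + real j * h + h))"
  have UL: "U = h * mu a + L"
    unfolding U_def L_def by (subst sum.lessThan_Suc_shift) (simp add: algebra_simps)
  have addn: "integral\<^sup>L lborel (\<lambda>t. indicator {a<..a + real k * h} t * \<nu> t)
       = (\<Sum>j<k. Wd \<nu> (a + real j * h) h)" for k
    unfolding Wd_def by (rule ioc_add) (use a h0 IntI in auto)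
  have addm: "integral\<^sup>L lborel (\<lambda>t. indicator {a<..a + real k * h} t * mu t)
       = (\<Sum>j<k. integral\<^sup>L lborel (\<lambda>t. indicator {a + real j * h<..a + real j * h + h} t * mu t))" for k
    by (rule ioc_add) (use a h0 mu_int in auto)
  have nu_up: "integral\<^sup>L lborel (\<lambda>t. indicator {a<..b} t * \<nu> t) \<le> U"
  proof -
    have "integral\<^sup>L lborel (\<lambda>t. indicator {a<..b} t * \<nu> t) \<le> integral\<^sup>L lborel (\<lambda>t. indicator {a<..a + real (Suc N) * h} t * \<nu> t)"
      by (rule ioc_mono_upper[OF intn intn N2]) (use a nn in auto)
    also have "\<dots> = (\<Sum>j<Suc N. Wd \<nu> (a + real j * h) h)" by (rule addn)
    also have "\<dots> \<le> U" unfolding U_def h_def by (intro sum_mono W_up pos[unfolded h_def])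
    finally show ?thesis .
  qed
  have nu_low: "L \<le> integral\<^sup>L lborel (\<lambda>t. indicator {a<..b} t * \<nu> t)"
  proof -
    have "L \<le> (\<Sum>j<N. Wd \<nu> (a + real j * h) h)" unfolding L_def h_def by (intro sum_mono W_low pos[unfolded h_def])
    also have "\<dots> = integral\<^sup>L lborel (\<lambda>t. indicator {a<..a + real N * h} t * \<nu> t)" by (rule addn[symmetric])
    also have "\<dots> \<le> integral\<^sup>L lborel (\<lambda>t. indicator {a<..b} t * \<nu> t)"
      by (rule ioc_mono_upper[OF intn intn N1]) (use a nn in auto)
    finally show ?thesis .
  qed
  have mu_up: "integral\<^sup>L lborel (\<lambda>t. indicator {a<..b} t * mu t) \<le> U"
  proof -
    have "integral\<^sup>L lborel (\<lambda>t. indicator {a<..b} t * mu t) \<le> integral\<^sup>L lborel (\<lambda>t. indicator {a<..a + real (Suc N) * h} t * mu t)"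
      by (rule ioc_mono_upper[OF intm intm N2]) (use mu_nn in auto)
    also have "\<dots> = (\<Sum>j<Suc N. integral\<^sup>L lborel (\<lambda>t. indicator {a + real j * h<..a + real j * h + h} t * mu t))"
      by (rule addm)
    also have "\<dots> \<le> U" unfolding U_def
    proof (rule sum_mono)
      fix j
      have "integral\<^sup>L lborel (\<lambda>t. indicator {a + real j * h<..a + real j * h + h} t * mu t)
          \<le> (a + real j * h + h - (a + real j * h)) * mu (a + real j * h)"
        by (rule ioc_const_bound[OF mu_int[OF pos]]) (use h0 pos mu_anti in auto)
      then show "integral\<^sup>L lborel (\<lambda>t. indicator {a + real j * h<..a + real j * h + h} t * mu t)
          \<le> h * mu (a + real j * h)" by simp
    qed
    finally show ?thesis .
  qed
  have mu_low: "L \<le> integral\<^sup>L lborel (\<lambda>t. indicator {a<..b} t * mu t)"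
  proof -
    have "L \<le> (\<Sum>j<N. integral\<^sup>L lborel (\<lambda>t. indicator {a + real j * h<..a + real j * h + h} t * mu t))"
      unfolding L_def
    proof (rule sum_mono)
      fix j
      have "(a + real j * h + h - (a + real j * h)) * mu (a + real j * h + h)
          \<le> integral\<^sup>L lborel (\<lambda>t. indicator {a + real j * h<..a + real j * h + h} t * mu t)"
      proof (rule ioc_const_bound2[OF mu_int[OF pos]])
        fix t assume "a + real j * h < t" "t \<le> a + real j * h + h"
        then show "mu (a + real j * h + h) \<le> mu t" using pos[of j] by (intro mu_anti) auto
      qed (use h0 in auto)
      then show "h * mu (a + real j * h + h)
          \<le> integral\<^sup>L lborel (\<lambda>t. indicator {a + real j * h<..a + real j * h + h} t * mu t)" by simp
    qed
    also have "\<dots> = integral\<^sup>L lborel (\<lambda>t. indicator {a<..a + real N * h} t * mu t)" by (rule addm[symmetric])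
    also have "\<dots> \<le> integral\<^sup>L lborel (\<lambda>t. indicator {a<..b} t * mu t)"
      by (rule ioc_mono_upper[OF intm intm N1]) (use mu_nn in auto)
    finally show ?thesis .
  qed
  show ?thesis using nu_up nu_low mu_up mu_low UL unfolding h_def by linarith
qed

end

lemma nnI:
  fixes G :: "real \<Rightarrow> real"
  assumes c: "0 < c" and int: "\<And>u v. 0 < u \<Longrightarrow> integrable lborel (\<lambda>t. indicator {u<..v} t * G t)"
    and nn: "\<And>t. 0 < t \<Longrightarrow> 0 \<le> G t"
  shows "(\<integral>\<^sup>+ t. ennreal (indicator {c<..d} t * G t) * indicator {x<..} t \<partial>lborel)
       = ennreal (integral\<^sup>L lborel (\<lambda>t. indicator {max c x<..d} t * G t))"
proof -
  have "(\<integral>\<^sup>+ t. ennreal (indicator {c<..d} t * G t) * indicator {x<..} t \<partial>lborel)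
      = (\<integral>\<^sup>+ t. ennreal (indicator {max c x<..d} t * G t) \<partial>lborel)"
    by (rule nn_integral_cong) (auto simp: indicator_def)
  also have "\<dots> = ennreal (integral\<^sup>L lborel (\<lambda>t. indicator {max c x<..d} t * G t))"
  proof (rule nn_integral_eq_integral)
    show "integrable lborel (\<lambda>t. indicator {max c x<..d} t * G t)" by (rule int) (use c in simp)
    show "AE t in lborel. 0 \<le> indicator {max c x<..d} t * G t"
      by (rule AE_I2) (use c nn in \<open>auto simp: indicator_def\<close>)
  qed
  finally show ?thesis .
qed

context dens begin

lemma I_eq:
  assumes a: "0 < a"
  shows "integral\<^sup>L lborel (\<lambda>t. indicator {a<..b} t * mu t) = integral\<^sup>L lborel (\<lambda>t. indicator {a<..b} t * \<nu> t)"
proof (cases "a \<le> b")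
  case True
  have lim: "(\<lambda>n. (1/2::real) ^ n * mu a) \<longlonglongrightarrow> 0"
    by (intro tendsto_mult_left_zero LIMSEQ_power_zero) simp
  have "\<bar>integral\<^sup>L lborel (\<lambda>t. indicator {a<..b} t * mu t) - integral\<^sup>L lborel (\<lambda>t. indicator {a<..b} t * \<nu> t)\<bar> \<le> 0"
    by (rule tendsto_lowerbound[OF lim]) (auto intro!: always_eventually riemann[OF a True])
  then show ?thesis by simp
next
  case False
  then have "{a<..b} = {}" by auto
  then show ?thesis by simp
qed

lemma AE_cd:
  assumes c: "0 < c"
  shows "AE t in lborel. indicator {c<..d} t * mu t = indicator {c<..d} t * \<nu> t"
proof -
  let ?f = "\<lambda>t. ennreal (indicator {c<..d} t * mu t)"
  let ?g = "\<lambda>t. ennreal (indicator {c<..d} t * \<nu> t)"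
  have mf: "?f \<in> borel_measurable lborel"
    using borel_measurable_integrable[OF mu_int[OF c, of d]] by measurable
  have mg: "?g \<in> borel_measurable lborel"
    using borel_measurable_integrable[OF IntI[OF c, of d]] by measurable
  have em: "emeasure (density lborel ?f) {x<..} = ennreal (integral\<^sup>L lborel (\<lambda>t. indicator {max c x<..d} t * mu t))"
    for x
    using nnI[OF c mu_int mu_nn, of d x] mf by (simp add: emeasure_density)
  have eg: "emeasure (density lborel ?g) {x<..} = ennreal (integral\<^sup>L lborel (\<lambda>t. indicator {max c x<..d} t * \<nu> t))"
    for x
    using nnI[OF c IntI nn, of d x] mg by (simp add: emeasure_density)
  have "density lborel ?f = density lborel ?g"
  proof (rule measure_eqI_lessThan)
    show "sets (density lborel ?f) = sets borel" "sets (density lborel ?g) = sets borel" by simp_all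
    show "emeasure (density lborel ?f) {x<..} < \<infinity>" for x unfolding em by simp
    show "emeasure (density lborel ?f) {x<..} = emeasure (density lborel ?g) {x<..}" for x
      unfolding em eg using I_eq[of "max c x" d] c by simp
  qed
  moreover have "integral\<^sup>N lborel ?f \<noteq> \<infinity>"
  proof -
    have "integral\<^sup>N lborel ?f = emeasure (density lborel ?f) UNIV"
      using mf by (simp add: emeasure_density)
    also have "\<dots> = emeasure (density lborel ?f) {(c - 1)<..}"
    proof -
      have "emeasure (density lborel ?f) UNIV = (\<integral>\<^sup>+ t. ?f t \<partial>lborel)" using mf by (simp add: emeasure_density)
      also have "\<dots> = (\<integral>\<^sup>+ t. ?f t * indicator {(c-1)<..} t \<partial>lborel)"
        by (rule nn_integral_cong) (use c in \<open>auto simp: indicator_def\<close>)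
      also have "\<dots> = emeasure (density lborel ?f) {(c - 1)<..}" using mf by (simp add: emeasure_density)
      finally show ?thesis .
    qed
    also have "\<dots> \<noteq> \<infinity>" unfolding em by simp
    finally show ?thesis .
  qed
  ultimately have "AE t in lborel. ?f t = ?g t"
    using finite_density_unique[OF mf mg] by simp
  then show ?thesis
  proof (rule AE_mp[OF _ AE_I2], intro impI)
    fix t assume "?f t = ?g t"
    moreover have "0 \<le> indicator {c<..d} t * mu t" using mu_nn by simp
    moreover have "0 \<le> indicator {c<..d} t * \<nu> t" using nn c by (auto simp: indicator_def)
    ultimately show "indicator {c<..d} t * mu t = indicator {c<..d} t * \<nu> t" by simp
  qed
qed

lemma AE_main: "AE t in lborel. 0 < t \<longrightarrow> mu t = \<nu> t"
proof -
  have "AE t in lborel. \<forall>N::nat. indicator {1 / real (Suc N)<..real (Suc N)} t * mu t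
                                  = indicator {1 / real (Suc N)<..real (Suc N)} t * \<nu> t"
    by (subst AE_all_countable) (intro allI AE_cd, simp)
  then show ?thesis
  proof (rule AE_mp[OF _ AE_I2], intro impI)
    fix t :: real
    assume H: "\<forall>N::nat. indicator {1 / real (Suc N)<..real (Suc N)} t * mu t
                       = indicator {1 / real (Suc N)<..real (Suc N)} t * \<nu> t"
      and t: "0 < t"
    obtain N1 :: nat where N1: "t \<le> real N1" using real_arch_simple by blast
    obtain N2 :: nat where N2: "1 / t < real N2" using reals_Archimedean2 by blast
    define N where "N = max N1 N2"
    have "t \<le> real (Suc N)" using N1 by (simp add: N_def)
    moreover have "1 / real (Suc N) < t"
    proof -
      have "1 / t < real (Suc N)" using N2 by (simp add: N_def)
      then show ?thesis using t by (simp add: field_simps)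
    qed
    ultimately have "indicator {1 / real (Suc N)<..real (Suc N)} t = (1::real)" by simp
    then show "mu t = \<nu> t" using H[rule_format, of N] by simp
  qed
qed

end

theorem proposition3p1:
  fixes f \<nu> :: "real \<Rightarrow> real" and l0 :: real
  assumes "completely_monotone f"
    and "rep_density f \<nu>"
    and "\<forall>t>0. \<nu> t > 0"
    and "l0 > 0"
    and "\<forall>n::nat. \<forall>x>l0.
           (-x) ^ n * (deriv ^^ n) f x / fact n
             \<ge> (-x) ^ (Suc n) * (deriv ^^ Suc n) f x / fact (Suc n)"
    and "(f \<longlongrightarrow> 0) at_top"
  shows "\<exists>\<mu> :: real \<Rightarrow> real.
           antimono_on {0<..} \<mu> \<and> (\<forall>t>0. \<mu> t \<ge> 0) \<and>
           (AE t in lborel. t > 0 \<longrightarrow> \<mu> t = \<nu> t)"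
proof -
  have INT: "\<And>x. 0 < x \<Longrightarrow> integrable lborel (\<lambda>t. indicator {0<..} t * (exp (- x * t) * \<nu> t))"
    using assms(2) unfolding rep_density_def set_integrable_def by simp
  have f0: "\<And>x. 0 < x \<Longrightarrow> f x = GG \<nu> 0 x"
    using assms(2) unfolding rep_density_def set_lebesgue_integral_def GG_def by simp
  have nn: "\<And>t. 0 < t \<Longrightarrow> 0 \<le> \<nu> t"
    using assms(2) unfolding rep_density_def by simp
  have D: "\<And>n x. 0 < x \<Longrightarrow> (deriv ^^ n) f x = GG \<nu> n x"
    using deriv_GG[OF INT nn f0] by blast
  have mono: "AA \<nu> (Suc k) x \<le> AA \<nu> k x" if x: "l0 < x" for x k
  proof -
    have x0: "0 < x" using x assms(4) by linarith
    have "(-x) ^ (Suc k) * (deriv ^^ Suc k) f x / fact (Suc k) \<le> (-x) ^ k * (deriv ^^ k) f x / fact k"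
      using assms(5) x by blast
    then show ?thesis unfolding D[OF x0] AA_GG .
  qed
  have WI: "Wd \<nu> b h \<le> Wd \<nu> a h" if "0 < a" "a \<le> b" "0 < h" for a b h
    unfolding Wd_def by (rule window_ineq[OF INT nn mono]) (use that assms(4) in auto)
  have IntI: "integrable lborel (\<lambda>t. indicator {u<..v} t * \<nu> t)" if u: "0 < u" for u v
  proof -
    have "integrable lborel (\<lambda>t. indicator {0<..} t * ((indicator {u<..v} t * exp t) * (exp (- 1 * t) * \<nu> t)))"
    proof (rule LI[OF INT])
      show "(\<lambda>t. indicator {u<..v} t * exp t) \<in> borel_measurable borel" by measurable
      fix t :: real
      show "\<bar>indicator {u<..v} t * exp t\<bar> \<le> exp v" by (auto simp: indicator_def)
    qed auto
    moreover have "(\<lambda>t. indicator {0<..} t * ((indicator {u<..v} t * exp t) * (exp (- 1 * t) * \<nu> t)))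
        = (\<lambda>t. indicator {u<..v} t * \<nu> t)"
    proof
      fix t :: real
      show "indicator {0<..} t * ((indicator {u<..v} t * exp t) * (exp (- 1 * t) * \<nu> t)) = indicator {u<..v} t * \<nu> t"
        using u by (auto simp: indicator_def exp_minus)
    qed
    ultimately show ?thesis by simp
  qed
  interpret dens \<nu> by unfold_locales (use IntI nn WI in auto)
  show ?thesis
  proof (intro exI conjI allI impI)
    show "antimono_on {0<..} mu"
      by (rule monotone_onI) (auto intro: mu_anti)
    show "0 \<le> mu t" for t by (rule mu_nn)
    show "AE t in lborel. 0 < t \<longrightarrow> mu t = \<nu> t" by (rule AE_main)
  qed
qed

end
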